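(* Let $G=(V,E)$ be a graph, $v\in V$, $S_v$ the partial star product of $v$, and $f\in F_v$. Then $f$ is the opposite edge (in a square of $S_v$) of exactly one primal edge $e\in E_v$, and $(e,f)\in\mathfrak d_{|S_v}$.
   Context: All graphs are finite, simple and undirected. For a graph $G=(V,E)$ and $v\in V$, $E_v$ denotes the set of edges incident to $v$. For two distinct adjacent edges $e=(v,u)$, $f=(v,w)$, a square spanned by $e$ and $f$ is a $4$-cycle $v,u,x,w,v$ with $x\notin\{v,u,w\}$; $x$ is its top vertex. The square is chordless if neither $(u,w)$ nor $(v,x)$ is an edge of $G$. In a square $v,u,x,w$, $(x,w)$ is the opposite edge of $(v,u)$ and $(x,u)$ is the opposite edge of $(v,w)$ (and vice versa). The relation $\delta(G)\subseteq E\times E$: $(e,f)\in\delta(G)$ iff (i) $e,f$ are distinct adjacent edges and it is not the case that $e$ and $f$ span exactly one square and that square is chordless; or (ii) $e,f$ are opposite edges of a chordless square; or (iii) $e=f$. Define $\mathfrak d_v=((E_v\times E)\cup(E\times E_v))\cap\delta(G)$ and $\mathfrak d_v^*$ the finest equivalence relation on $E$ containing $\mathfrak d_v$. Let $F_v\subseteq E\setminus E_v$ be the set of edges that are the edges not incident to $v$ of some chordless square spanned by two edges $e,e'\in E_v$ with $(e,e')\notin\mathfrak d_v^*$. The partial star product $S_v$ is the subgraph of $G$ with edge set $E_v\cup F_v$ and vertex set the endpoints of these edges. Define $\mathfrak d_{|S_v}=\{(e,f)\in\mathfrak d_v^*: e,f\in E(S_v)\}$, an equivalence relation on $E(S_v)$.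 *)

theory Defs
  imports Main
begin

definition graph :: "'a set \<Rightarrow> 'a set set \<Rightarrow> bool" where
  "graph V E \<longleftrightarrow> finite V \<and> (\<forall>e\<in>E. \<exists>u w. u \<noteq> w \<and> u \<in> V \<and> w \<in> V \<and> e = {u, w})"

definition inc_edges :: "'a set set \<Rightarrow> 'a \<Rightarrow> 'a set set" where
  "inc_edges E v = {e \<in> E. v \<in> e}"

text \<open>x is the top vertex of a square v,u,x,w,v spanned by (v,u) and (v,w).\<close>
definition sq_top :: "'a set set \<Rightarrow> 'a \<Rightarrow> 'a \<Rightarrow> 'a \<Rightarrow> 'a \<Rightarrow> bool" where
  "sq_top E v u w x \<longleftrightarrow> x \<notin> {v, u, w} \<and> {u, x} \<in> E \<and> {x, w} \<in> E"

definition chordless :: "'a set set \<Rightarrow> 'a \<Rightarrow> 'a \<Rightarrow> 'a \<Rightarrow> 'a \<Rightarrow> bool" where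
  "chordless E v u w x \<longleftrightarrow> {u, w} \<notin> E \<and> {v, x} \<notin> E"

definition cycle4 :: "'a set set \<Rightarrow> 'a \<Rightarrow> 'a \<Rightarrow> 'a \<Rightarrow> 'a \<Rightarrow> bool" where
  "cycle4 E a b c d \<longleftrightarrow> distinct [a, b, c, d] \<and>
     {a, b} \<in> E \<and> {b, c} \<in> E \<and> {c, d} \<in> E \<and> {d, a} \<in> E"

definition opposite :: "'a set set \<Rightarrow> 'a set \<Rightarrow> 'a set \<Rightarrow> bool" where
  "opposite E e f \<longleftrightarrow> (\<exists>a b c d. cycle4 E a b c d \<and> e = {a, b} \<and> f = {c, d})"

definition opposite_chordless :: "'a set set \<Rightarrow> 'a set \<Rightarrow> 'a set \<Rightarrow> bool" where
  "opposite_chordless E e f \<longleftrightarrow> (\<exists>a b c d. cycle4 E a b c d \<and> {a, c} \<notin> E \<and> {b, d} \<notin> E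
      \<and> e = {a, b} \<and> f = {c, d})"

text \<open>Condition (i): distinct adjacent edges, and it is not the case that they span exactly one
  square and that square is chordless.\<close>
definition delta_i :: "'a set set \<Rightarrow> 'a set \<Rightarrow> 'a set \<Rightarrow> bool" where
  "delta_i E e f \<longleftrightarrow> (\<exists>v u w. u \<noteq> w \<and> v \<noteq> u \<and> v \<noteq> w \<and> e = {v, u} \<and> f = {v, w} \<and>
      \<not> (\<exists>x. {y. sq_top E v u w y} = {x} \<and> chordless E v u w x))"

definition delta :: "'a set set \<Rightarrow> ('a set \<times> 'a set) set" where
  "delta E = {(e, f). e \<in> E \<and> f \<in> E \<and> (delta_i E e f \<or> opposite_chordless E e f \<or> e = f)}"

definition dv :: "'a set set \<Rightarrow> 'a \<Rightarrow> ('a set \<times> 'a set) set" where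
  "dv E v = ((inc_edges E v \<times> E) \<union> (E \<times> inc_edges E v)) \<inter> delta E"

definition dv_star :: "'a set set \<Rightarrow> 'a \<Rightarrow> ('a set \<times> 'a set) set" where
  "dv_star E v = \<Inter> {R. equiv E R \<and> dv E v \<subseteq> R}"

definition Fv :: "'a set set \<Rightarrow> 'a \<Rightarrow> 'a set set" where
  "Fv E v = {g. g \<in> E \<and> g \<notin> inc_edges E v \<and> (\<exists>u w x.
      {v, u} \<in> inc_edges E v \<and> {v, w} \<in> inc_edges E v \<and> u \<noteq> w \<and> v \<noteq> u \<and> v \<noteq> w \<and>
      ({v, u}, {v, w}) \<notin> dv_star E v \<and> sq_top E v u w x \<and> chordless E v u w x \<and>
      (g = {u, x} \<or> g = {x, w}))}"

definition Sv_edges :: "'a set set \<Rightarrow> 'a \<Rightarrow> 'a set set" where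
  "Sv_edges E v = inc_edges E v \<union> Fv E v"

definition Sv_verts :: "'a set set \<Rightarrow> 'a \<Rightarrow> 'a set" where
  "Sv_verts E v = \<Union> (Sv_edges E v)"

definition d_restr :: "'a set set \<Rightarrow> 'a \<Rightarrow> ('a set \<times> 'a set) set" where
  "d_restr E v = {(e, f) \<in> dv_star E v. e \<in> Sv_edges E v \<and> f \<in> Sv_edges E v}"

end

theory Submission
  imports Defs
begin

lemma dv_sub: "p \<in> dv E v \<Longrightarrow> p \<in> dv_star E v"
  unfolding dv_star_def by blast

lemma dv_sym: "(a,b) \<in> dv_star E v \<Longrightarrow> (b,a) \<in> dv_star E v"
  unfolding dv_star_def equiv_def by (auto dest: symD)

lemma dv_trans: "(a,b) \<in> dv_star E v \<Longrightarrow> (b,c) \<in> dv_star E v \<Longrightarrow> (a,c) \<in> dv_star E v"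
  unfolding dv_star_def equiv_def by (auto dest: transD)

lemma Sv_sub: "Sv_edges E v \<subseteq> E"
  unfolding Sv_edges_def inc_edges_def Fv_def by auto

lemma key:
  assumes vu: "{v,u} \<in> E" and vw: "{v,w} \<in> E" and d: "u \<noteq> w" "v \<noteq> u" "v \<noteq> w"
    and top: "sq_top E v u w x" and ch: "chordless E v u w x"
    and vy: "{v,y} \<in> E" and yx: "{y,x} \<in> E" and yd: "y \<noteq> u" "y \<noteq> v" "y \<noteq> x" "y \<noteq> w"
  shows "({v,u},{v,w}) \<in> dv_star E v"
proof -
  have ux: "{u,x} \<in> E" and xw: "{x,w} \<in> E" and xn: "x \<noteq> v" "x \<noteq> u" "x \<noteq> w"
    using top unfolding sq_top_def by auto
  have uw: "{u,w} \<notin> E" and vx: "{v,x} \<notin> E" using ch unfolding chordless_def by auto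
  have t1: "sq_top E w v x u" using d xn vu ux unfolding sq_top_def by auto
  have t2: "sq_top E w v x y" using yd xn vy yx unfolding sq_top_def by auto
  have ns: "\<not> (\<exists>t. {y. sq_top E w v x y} = {t} \<and> chordless E w v x t)"
  proof
    assume "\<exists>t. {y. sq_top E w v x y} = {t} \<and> chordless E w v x t"
    then obtain t where "{y. sq_top E w v x y} = {t}" by blast
    hence "u = t" "y = t" using t1 t2 by (auto simp: set_eq_iff)
    thus False using yd by simp
  qed
  have "delta_i E {v,w} {w,x}"
    unfolding delta_i_def
    apply (rule exI[of _ w], rule exI[of _ v], rule exI[of _ x])
    using d xn ns by (simp add: insert_commute[of v w])
  hence "({v,w},{w,x}) \<in> dv E v"
    using vw xw unfolding dv_def delta_def inc_edges_def by (auto simp: insert_commute[of w x])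
  hence "({v,w},{w,x}) \<in> dv_star E v" by (rule dv_sub)
  hence r1: "({w,x},{v,w}) \<in> dv_star E v" by (rule dv_sym)
  have "opposite_chordless E {v,u} {x,w}"
    unfolding opposite_chordless_def cycle4_def
    using d xn vu ux xw vw uw vx by (intro exI[of _ v] exI[of _ u] exI[of _ x] exI[of _ w])
      (simp add: insert_commute[of w v])
  hence "({v,u},{x,w}) \<in> dv E v"
    using vu xw unfolding dv_def delta_def inc_edges_def by auto
  hence r2: "({v,u},{w,x}) \<in> dv_star E v" using dv_sub[of "({v,u},{x,w})" E v] by (simp add: insert_commute[of x w])
  show ?thesis using dv_trans[OF r2 r1] .
qed

lemma core:
  assumes vu: "{v,u} \<in> E" and vw: "{v,w} \<in> E" and d: "u \<noteq> w" "v \<noteq> u" "v \<noteq> w"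
    and nr: "({v,u},{v,w}) \<notin> dv_star E v"
    and top: "sq_top E v u w x" and ch: "chordless E v u w x"
    and fd: "f = {u,x}" and fF: "f \<in> Fv E v"
  shows "\<exists>e. (e \<in> inc_edges E v \<and> opposite (Sv_edges E v) e f \<and> (e, f) \<in> d_restr E v)
           \<and> (\<forall>e'. e' \<in> inc_edges E v \<and> opposite (Sv_edges E v) e' f \<longrightarrow> e' = e)"
proof -
  have ux: "{u,x} \<in> E" and xw: "{x,w} \<in> E" and xn: "x \<noteq> v" "x \<noteq> u" "x \<noteq> w"
    using top unfolding sq_top_def by auto
  have uw: "{u,w} \<notin> E" and vx: "{v,x} \<notin> E" using ch unfolding chordless_def by auto
  have ei: "{v,w} \<in> inc_edges E v" and ui: "{v,u} \<in> inc_edges E v"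
    using vw vu unfolding inc_edges_def by auto
  have xwF: "{x,w} \<in> Fv E v"
    unfolding Fv_def mem_Collect_eq
    apply (intro conjI xw)
    subgoal using xn d unfolding inc_edges_def by auto
    apply (rule exI[of _ u], rule exI[of _ w], rule exI[of _ x])
    using ei ui d nr top ch by simp
  have S1: "{v,w} \<in> Sv_edges E v" "{v,u} \<in> Sv_edges E v" "{x,w} \<in> Sv_edges E v" "f \<in> Sv_edges E v"
    using ei ui xwF fF unfolding Sv_edges_def by auto
  have opp: "opposite (Sv_edges E v) {v,w} f"
    unfolding opposite_def cycle4_def
    apply (rule exI[of _ v], rule exI[of _ w], rule exI[of _ x], rule exI[of _ u])
    using S1 d xn fd by (simp add: insert_commute[of w x] insert_commute[of u v] insert_commute[of x u])
  have "opposite_chordless E {v,w} {x,u}"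
    unfolding opposite_chordless_def cycle4_def
    using d xn vu ux xw vw uw vx by (intro exI[of _ v] exI[of _ w] exI[of _ x] exI[of _ u])
      (simp add: insert_commute[of w x] insert_commute[of u v] insert_commute[of w u] insert_commute[of x u])
  hence "({v,w},f) \<in> dv E v"
    using vw ux fd unfolding dv_def delta_def inc_edges_def by (auto simp: insert_commute[of x u])
  hence "({v,w},f) \<in> d_restr E v" using S1 dv_sub unfolding d_restr_def by auto
  moreover have "e' = {v,w}" if e'i: "e' \<in> inc_edges E v" and o: "opposite (Sv_edges E v) e' f" for e'
  proof -
    from o obtain a b c dd where cy: "cycle4 (Sv_edges E v) a b c dd" and ee: "e' = {a,b}" and ff: "f = {c,dd}"
      unfolding opposite_def by blast
    have cyE: "distinct [a,b,c,dd]" "{a,b} \<in> E" "{b,c} \<in> E" "{c,dd} \<in> E" "{dd,a} \<in> E"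
      using cy Sv_sub[of E v] unfolding cycle4_def by auto
    have va: "v = a \<or> v = b" using e'i ee unfolding inc_edges_def by auto
    have cd: "(c = u \<and> dd = x) \<or> (c = x \<and> dd = u)" using ff fd cyE(1) xn
      by (auto simp: doubleton_eq_iff)
    show ?thesis
    proof (cases "v = a")
      case True
      have "dd = u" using cd cyE(5) vx True by (metis insert_commute)
      hence "c = x" using cd xn by auto
      have "b = w"
      proof (rule ccontr)
        assume "b \<noteq> w"
        have "({v,u},{v,w}) \<in> dv_star E v"
          by (rule key[OF vu vw d top ch, of b]) (use cyE True \<open>dd = u\<close> \<open>c = x\<close> \<open>b \<noteq> w\<close> in auto)
        thus False using nr by simp
      qed
      thus ?thesis using ee True by simp
    next
      case False
      hence vb: "v = b" using va by simp
      have "c = u" using cd cyE(3) vx vb by auto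
      hence "dd = x" using cd xn by auto
      have "a = w"
      proof (rule ccontr)
        assume "a \<noteq> w"
        have "({v,u},{v,w}) \<in> dv_star E v"
          by (rule key[OF vu vw d top ch, of a]) (use cyE vb \<open>dd = x\<close> \<open>c = u\<close> \<open>a \<noteq> w\<close> in \<open>auto, (metis insert_commute)+\<close>)
        thus False using nr by simp
      qed
      thus ?thesis using ee vb by (simp add: insert_commute)
    qed
  qed
  ultimately show ?thesis using ei opp by blast
qed

theorem lemma3p4:
  fixes V :: "'a set" and E :: "'a set set" and v :: 'a and f :: "'a set"
  assumes "graph V E" and "v \<in> V" and "f \<in> Fv E v"
  shows "\<exists>e. (e \<in> inc_edges E v \<and> opposite (Sv_edges E v) e f \<and> (e, f) \<in> d_restr E v)
           \<and> (\<forall>e'. e' \<in> inc_edges E v \<and> opposite (Sv_edges E v) e' f \<longrightarrow> e' = e)"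
proof -
  from assms(3) obtain u w x where h: "{v,u} \<in> E" "{v,w} \<in> E" "u \<noteq> w" "v \<noteq> u" "v \<noteq> w"
    "({v,u},{v,w}) \<notin> dv_star E v" "sq_top E v u w x" "chordless E v u w x"
    "f = {u,x} \<or> f = {x,w}"
    unfolding Fv_def inc_edges_def by blast
  show ?thesis
  proof (cases "f = {u,x}")
    case True
    show ?thesis by (rule core[OF h(1-8) True assms(3)])
  next
    case False
    hence f: "f = {w,x}" using h(9) by (auto simp: insert_commute[of x w])
    have nr: "({v,w},{v,u}) \<notin> dv_star E v" using h(6) dv_sym by metis
    have t: "sq_top E v w u x" using h(7) unfolding sq_top_def by (auto simp: insert_commute[of w x] insert_commute[of x u])
    have c: "chordless E v w u x" using h(8) unfolding chordless_def by (auto simp: insert_commute[of w u])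
    show ?thesis by (rule core[OF h(2) h(1) _ h(5) h(4) nr t c f assms(3)]) (use h(3) in auto)
  qed
qed

end
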